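(* Let $A$ be an $n\times n$ dilation matrix and let $\mu$ be its smallest singular value. If $\mu>2$, then $A$ yields a radix representation of $\mathbb{Z}^n$ with digit set $D=A(F)\cap\mathbb{Z}^n$, where $F=[-\tfrac12,\tfrac12)^n$; that is, every $x\in\mathbb{Z}^n$ can be written as $\sum_{j=0}^NA^jd_j$ with $N\ge0$ and $d_j\in D$.
   Context: A dilation matrix is an $n\times n$ matrix with integer entries all of whose eigenvalues $\lambda$ satisfy $|\lambda|>1$. $D$ is a complete set of coset representatives of $\mathbb{Z}^n/A(\mathbb{Z}^n)$. *)

theory Defs
  imports "HOL-Analysis.Analysis"
begin

definition int_lattice :: "(real^'n) set" where
  "int_lattice = {x. \<forall>i. x $ i \<in> \<int>}"

definition int_matrix :: "real^'n^'n \<Rightarrow> bool" where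
  "int_matrix A \<longleftrightarrow> (\<forall>i j. A $ i $ j \<in> \<int>)"

definition cmat :: "real^'n^'n \<Rightarrow> complex^'n^'n" where
  "cmat A = (\<chi> i j. complex_of_real (A $ i $ j))"

definition eigenvalues :: "real^'n^'n \<Rightarrow> complex set" where
  "eigenvalues A = {l. \<exists>v::complex^'n. v \<noteq> 0 \<and> cmat A *v v = l *s v}"

definition dilation_matrix :: "real^'n^'n \<Rightarrow> bool" where
  "dilation_matrix A \<longleftrightarrow> int_matrix A \<and> (\<forall>l \<in> eigenvalues A. cmod l > 1)"

definition singular_values :: "real^'n^'n \<Rightarrow> real set" where
  "singular_values A =
     sqrt ` {l. \<exists>v::real^'n. v \<noteq> 0 \<and> (transpose A ** A) *v v = l *s v}"

definition smallest_singular_value :: "real^'n^'n \<Rightarrow> real" where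
  "smallest_singular_value A = Min (singular_values A)"

primrec mat_pow :: "real^'n^'n \<Rightarrow> nat \<Rightarrow> real^'n^'n" where
  "mat_pow A 0 = mat 1"
| "mat_pow A (Suc k) = A ** mat_pow A k"

definition half_box :: "(real^'n) set" where
  "half_box = {x. \<forall>i. -1/2 \<le> x $ i \<and> x $ i < 1/2}"

definition digit_set :: "real^'n^'n \<Rightarrow> (real^'n) set" where
  "digit_set A = ((\<lambda>x. A *v x) ` half_box) \<inter> int_lattice"

end

theory Submission
  imports Defs
begin

lemma tr_inner: "(transpose A *v u) \<bullet> v = u \<bullet> ((A::real^'n^'m) *v v)"
  by (metis dot_lmul_matrix transpose_transpose vector_transpose_matrix)

lemma quad_eq: "((transpose A ** A) *v a) \<bullet> b = (A *v a) \<bullet> ((A::real^'n^'m) *v b)"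
  by (metis inner_commute matrix_vector_mul_assoc tr_inner)

lemma eig_finite:
  fixes A :: "real^'n^'m"
  shows "finite {l. \<exists>v::real^'n. v \<noteq> 0 \<and> (transpose A ** A) *v v = l *s v}" (is "finite ?E")
proof -
  let ?M = "transpose A ** A"
  define w where "w l = (SOME v. v \<noteq> 0 \<and> ?M *v v = l *s v)" for l
  have w: "w l \<noteq> 0 \<and> ?M *v w l = l *s w l" if "l \<in> ?E" for l
    using that unfolding w_def by (smt (verit, del_insts) mem_Collect_eq someI_ex)
  have orth: "w l1 \<bullet> w l2 = 0" if "l1 \<in> ?E" "l2 \<in> ?E" "l1 \<noteq> l2" for l1 l2
  proof -
    have "l1 * (w l1 \<bullet> w l2) = (?M *v w l1) \<bullet> w l2" using w[OF that(1)]
      by (simp add: scalar_mult_eq_scaleR)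
    also have "\<dots> = w l1 \<bullet> (?M *v w l2)"
      using quad_eq[of A "w l1" "w l2"] quad_eq[of A "w l2" "w l1"] by (simp add: inner_commute)
    also have "\<dots> = l2 * (w l1 \<bullet> w l2)" using w[OF that(2)]
      by (simp add: scalar_mult_eq_scaleR)
    finally show ?thesis using that(3) by auto
  qed
  have inj: "inj_on w ?E"
  proof (rule inj_onI)
    fix a b assume "a \<in> ?E" "b \<in> ?E" "w a = w b"
    show "a = b"
    proof (rule ccontr)
      assume "a \<noteq> b"
      then have "w a \<bullet> w a = 0" using orth[of a b] \<open>w a = w b\<close> \<open>a \<in> ?E\<close> \<open>b \<in> ?E\<close> by simp
      then show False using w[OF \<open>a \<in> ?E\<close>] by simp
    qed
  qed
  have "pairwise orthogonal (w ` ?E)"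
  proof (rule pairwiseI)
    fix x y assume xy: "x \<in> w ` ?E" "y \<in> w ` ?E" "x \<noteq> y"
    obtain l1 where l1: "x = w l1" "l1 \<in> ?E" using xy(1) by (rule imageE)
    obtain l2 where l2: "y = w l2" "l2 \<in> ?E" using xy(2) by (rule imageE)
    have "l1 \<noteq> l2" using xy(3) l1(1) l2(1) by metis
    then show "orthogonal x y" unfolding orthogonal_def l1(1) l2(1) by (rule orth[OF l1(2) l2(2)])
  qed
  moreover have "0 \<notin> w ` ?E"
  proof
    assume "0 \<in> w ` ?E"
    then obtain l where l: "0 = w l" "l \<in> ?E" by (rule imageE)
    then show False using w[OF l(2)] by simp
  qed
  ultimately have "independent (w ` ?E)" by (rule pairwise_orthogonal_independent)
  then have "finite (w ` ?E)" by (rule independent_imp_finite)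
  then show ?thesis using inj finite_imageD by blast
qed

lemma sq_exp: fixes p q :: "'a::real_inner"
  shows "norm (p + t *\<^sub>R q)^2 = norm p^2 + 2*t*(p \<bullet> q) + t^2 * norm q^2"
  unfolding power2_norm_eq_inner
  by (simp add: inner_add_left inner_add_right inner_commute[of q p] power2_eq_square algebra_simps)

lemma sphere_ne: "sphere (0::real^'n) 1 \<noteq> {}"
proof -
  have "(SOME i. i \<in> Basis) \<in> sphere (0::real^'n) 1" by (simp add: SOME_Basis norm_Basis)
  then show ?thesis by blast
qed

lemma key_bound:
  fixes A :: "real^'n^'n"
  assumes "smallest_singular_value A > 2"
  shows "\<exists>m>4. \<forall>w. norm (A *v w)^2 \<ge> m * norm w ^2"
proof -
  let ?M = "transpose A ** A"
  define f where "f v = norm (A *v v)^2" for v :: "real^'n"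
  have cont: "continuous_on (sphere 0 1) f"
    unfolding f_def by (intro continuous_intros linear_continuous_on matrix_vector_mul_bounded_linear)
  obtain v0 where v0: "v0 \<in> sphere 0 1" and mn: "\<forall>y\<in>sphere 0 1. f v0 \<le> f y"
    using continuous_attains_inf[OF compact_sphere sphere_ne cont] by blast
  define m where "m = f v0"
  have nv0: "norm v0 = 1" using v0 by simp
  have lb: "m * norm w ^2 \<le> f w" for w
  proof (cases "w = 0")
    case True then show ?thesis by (simp add: f_def)
  next
    case False
    let ?u = "(1 / norm w) *\<^sub>R w"
    have "?u \<in> sphere 0 1" using False by simp
    then have "m \<le> f ?u" using mn m_def by auto
    also have "f ?u = f w / norm w ^2"
      unfolding f_def by (simp add: matrix_vector_mult_scaleR power_divide)
    finally show ?thesis using False by (simp add: field_simps)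
  qed
  have f_exp: "f (v0 + t *\<^sub>R u) = f v0 + 2 * t * ((A *v v0) \<bullet> (A *v u)) + t^2 * f u" for t u
  proof -
    have Ae: "A *v (v0 + t *\<^sub>R u) = A *v v0 + t *\<^sub>R (A *v u)"
      by (simp add: matrix_vector_right_distrib matrix_vector_mult_scaleR)
    show ?thesis unfolding f_def Ae by (rule sq_exp)
  qed
  have n_exp: "norm (v0 + t *\<^sub>R u)^2 = 1 + 2 * t * (v0 \<bullet> u) + t^2 * norm u ^2" for t u
    using sq_exp[of v0 t u] nv0 by simp
  define u where "u = ?M *v v0 - m *s v0"
  have lin: "(A *v v0) \<bullet> (A *v u) - m * (v0 \<bullet> u) = u \<bullet> u"
    unfolding u_def by (simp add: quad_eq[symmetric] inner_diff_left scalar_mult_eq_scaleR inner_commute)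
  define P where "P = (A *v v0) \<bullet> (A *v u)"
  define a where "a = P - m * (v0 \<bullet> u)"
  define c where "c = f u - m * norm u ^2"
  have g: "0 \<le> 2 * t * a + t^2 * c" for t
  proof -
    have "m * norm (v0 + t *\<^sub>R u)^2 \<le> f (v0 + t *\<^sub>R u)" by (rule lb)
    then have "m * (1 + 2 * t * (v0 \<bullet> u) + t^2 * norm u ^2) \<le> m + 2 * t * P + t^2 * f u"
      unfolding f_exp n_exp m_def P_def by simp
    moreover have "2 * t * a + t^2 * c = (m + 2 * t * P + t^2 * f u) - m * (1 + 2 * t * (v0 \<bullet> u) + t^2 * norm u ^2)"
      unfolding a_def c_def by (simp add: algebra_simps)
    ultimately show ?thesis by linarith
  qed
  have aeq: "a = u \<bullet> u" using lin unfolding a_def P_def .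
  have a0: "a \<ge> 0" unfolding aeq by simp
  have "a = 0"
  proof (cases "c \<le> 0")
    case True
    then show ?thesis using g[of "-1"] a0 by simp
  next
    case False
    have "0 \<le> 2 * (-a/c) * a + (-a/c)^2 * c" by (rule g)
    also have "\<dots> = - (a*a) / c" using False by (simp add: power2_eq_square field_simps)
    finally have "a * a \<le> 0" using False by (simp add: divide_le_0_iff)
    then show ?thesis using a0 by (metis mult_nonneg_nonneg order_antisym_conv mult_eq_0_iff)
  qed
  then have "u = 0" unfolding aeq by simp
  then have eig: "?M *v v0 = m *s v0" unfolding u_def by simp
  have v00: "v0 \<noteq> 0" using nv0 by auto
  have mE: "m \<in> {l. \<exists>v::real^'n. v \<noteq> 0 \<and> ?M *v v = l *s v}" using eig v00 by blast
  have fin: "finite (singular_values A)"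
    unfolding singular_values_def using eig_finite by blast
  have "sqrt m \<in> singular_values A" unfolding singular_values_def using mE by blast
  then have "smallest_singular_value A \<le> sqrt m"
    unfolding smallest_singular_value_def using fin by simp
  then have "2 < sqrt m" using assms by simp
  then have "4 < m"
    using real_sqrt_less_iff[of 4 m] by simp
  then show ?thesis using lb unfolding f_def by blast
qed

lemma nsq: "norm (x::real^'n) ^ 2 = (\<Sum>i\<in>UNIV. (x $ i)^2)"
  unfolding power2_norm_eq_inner inner_vec_def by (simp add: power2_eq_square)

lemma nsq_int: "x \<in> int_lattice \<Longrightarrow> norm x ^ 2 \<in> \<int>"
  unfolding nsq int_lattice_def by (intro Ints_sum Ints_power) auto

lemma lat_diff: "x \<in> int_lattice \<Longrightarrow> y \<in> int_lattice \<Longrightarrow> x - y \<in> int_lattice"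
  unfolding int_lattice_def by (auto intro: Ints_diff)

lemma lat_mult: "int_matrix A \<Longrightarrow> r \<in> int_lattice \<Longrightarrow> A *v r \<in> int_lattice"
  unfolding int_lattice_def int_matrix_def matrix_vector_mult_def
  by (auto intro!: Ints_sum Ints_mult)

lemma round_bound: fixes y :: real shows "(of_int \<lfloor>y + 1/2\<rfloor>)^2 \<le> 4 * y^2"
proof -
  define k where "k = \<lfloor>y + 1/2\<rfloor>"
  have k1: "of_int k \<le> y + 1/2" "y + 1/2 < of_int k + 1" unfolding k_def by linarith+
  have "\<bar>real_of_int k\<bar> \<le> 2 * \<bar>y\<bar>"
  proof (cases "k = 0")
    case False
    then have "k \<ge> 1 \<or> k \<le> -1" by linarith
    then show ?thesis using k1 by (auto simp: abs_if)
  qed simp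
  then have "\<bar>real_of_int k\<bar>^2 \<le> (2 * \<bar>y\<bar>)^2" by (rule power_mono) simp
  then show ?thesis unfolding k_def by (simp add: power_mult_distrib)
qed

lemma int_lt: "(a::real) \<in> \<int> \<Longrightarrow> b \<in> \<int> \<Longrightarrow> a < b \<Longrightarrow> a \<le> b - 1"
  by (elim Ints_cases) simp

lemma mat_pow_Suc_v: "mat_pow A (Suc j) *v v = A *v (mat_pow A j *v v)"
  by (simp add: matrix_vector_mul_assoc)

lemma zero_digit: "0 \<in> digit_set A"
  unfolding digit_set_def half_box_def int_lattice_def
  by (auto intro!: image_eqI[of _ _ 0])

theorem mainTheorem8:
  fixes A :: "real^'n^'n"
  assumes "dilation_matrix A"
    and "smallest_singular_value A > 2"
  shows "\<forall>x \<in> int_lattice. \<exists>N::nat. \<exists>d::nat \<Rightarrow> real^'n.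
           (\<forall>j\<le>N. d j \<in> digit_set A) \<and> x = (\<Sum>j\<le>N. mat_pow A j *v d j)"
proof -
  have intA: "int_matrix A" using assms(1) unfolding dilation_matrix_def by simp
  obtain m where m4: "m > 4" and mb: "\<And>w. m * norm w ^2 \<le> norm (A *v w)^2"
    using key_bound[OF assms(2)] by blast
  have big: "4 * norm w ^2 < norm (A *v w)^2" if "w \<noteq> 0" for w
  proof -
    have "0 < norm w ^2" using that by simp
    then have "4 * norm w ^2 < m * norm w ^2" using m4 by simp
    then show ?thesis using mb[of w] by linarith
  qed
  have inj: "inj (\<lambda>w. A *v w)"
  proof (rule injI)
    fix a b assume "A *v a = A *v b"
    then have "A *v (a - b) = 0" by (simp add: matrix_vector_mult_diff_distrib)
    then show "a = b"
    proof (rule contrapos_pp)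
      assume "a \<noteq> b"
      then have "4 * norm (a - b) ^2 < norm (A *v (a - b))^2" by (intro big) simp
      then show "A *v (a - b) \<noteq> 0" by auto
    qed
  qed
  have surj: "surj (\<lambda>w. A *v w)"
    using linear_injective_imp_surjective[OF matrix_vector_mul_linear inj] by simp
  define rep where "rep x \<longleftrightarrow> (\<exists>N::nat. \<exists>d::nat \<Rightarrow> real^'n.
           (\<forall>j\<le>N. d j \<in> digit_set A) \<and> x = (\<Sum>j\<le>N. mat_pow A j *v d j))" for x
  have rep0: "rep 0" unfolding rep_def
    by (rule exI[of _ 0], rule exI[of _ "\<lambda>_. 0"]) (simp add: zero_digit)
  have step: "\<exists>d r. d \<in> digit_set A \<and> r \<in> int_lattice \<and> x = d + A *v r \<and> norm r ^2 < norm x ^2"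
    if x: "x \<in> int_lattice" "x \<noteq> 0" for x :: "real^'n"
  proof -
    obtain y where y: "x = A *v y" using surj by (metis surjD)
    have y0: "y \<noteq> 0" using y x(2) by auto
    define r :: "real^'n" where "r = (\<chi> i. of_int \<lfloor>y $ i + 1/2\<rfloor>)"
    define d where "d = x - A *v r"
    have rl: "r \<in> int_lattice" unfolding r_def int_lattice_def by simp
    have dl: "d \<in> int_lattice" unfolding d_def by (rule lat_diff[OF x(1) lat_mult[OF intA rl]])
    have "y - r \<in> half_box" unfolding half_box_def r_def by (auto; linarith)
    moreover have "d = A *v (y - r)" unfolding d_def y by (simp add: matrix_vector_mult_diff_distrib)
    ultimately have dd: "d \<in> digit_set A" using dl unfolding digit_set_def by blast
    have "norm r ^2 \<le> 4 * norm y ^2" unfolding nsq sum_distrib_left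
      by (rule sum_mono) (simp add: r_def round_bound)
    also have "\<dots> < norm x ^2" using big[OF y0] y by simp
    finally show ?thesis using dd rl d_def by (intro exI[of _ d] exI[of _ r]) auto
  qed
  have main: "\<forall>x\<in>(int_lattice :: (real^'n) set). norm x ^2 \<le> real k \<longrightarrow> rep x" for k
  proof (induction k)
    case 0
    then show ?case using rep0 by auto
  next
    case (Suc k)
    show ?case
    proof (intro ballI impI)
      fix x :: "real^'n" assume xl: "x \<in> int_lattice" and xk: "norm x ^2 \<le> real (Suc k)"
      show "rep x"
      proof (cases "x = 0")
        case True then show ?thesis using rep0 by simp
      next
        case False
        obtain d r where d: "d \<in> digit_set A" and rl: "r \<in> int_lattice" and xe: "x = d + A *v r"
          and lt: "norm r ^2 < norm x ^2" using step[OF xl False] by blast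
        have "norm r ^2 \<le> norm x ^2 - 1" by (rule int_lt[OF nsq_int[OF rl] nsq_int[OF xl] lt])
        then have "norm r ^2 \<le> real k" using xk by simp
        then have "rep r" using Suc.IH rl by blast
        then obtain N e where e: "\<forall>j\<le>N. e j \<in> digit_set A" and re: "r = (\<Sum>j\<le>N. mat_pow A j *v e j)"
          unfolding rep_def by blast
        define d' where "d' j = (case j of 0 \<Rightarrow> d | Suc i \<Rightarrow> e i)" for j
        have "(\<Sum>j\<le>Suc N. mat_pow A j *v d' j) = d + (\<Sum>j\<le>N. A *v (mat_pow A j *v e j))"
          unfolding sum.atMost_Suc_shift d'_def by (simp add: matrix_vector_mul_assoc)
        also have "(\<Sum>j\<le>N. A *v (mat_pow A j *v e j)) = A *v r"
          unfolding re by (simp add: linear_sum[OF matrix_vector_mul_linear] o_def)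
        finally have X: "x = (\<Sum>j\<le>Suc N. mat_pow A j *v d' j)" using xe by simp
        have D: "\<forall>j\<le>Suc N. d' j \<in> digit_set A"
          using d e by (auto simp: d'_def split: nat.split)
        show ?thesis unfolding rep_def by (rule exI[of _ "Suc N"], rule exI[of _ d'], rule conjI[OF D X])
      qed
    qed
  qed
  show ?thesis
  proof
    fix x :: "real^'n" assume "x \<in> int_lattice"
    moreover obtain k :: nat where "norm x ^2 \<le> real k" using real_arch_simple by blast
    ultimately have "rep x" using main[of k] by blast
    then show "\<exists>N d. (\<forall>j\<le>N. d j \<in> digit_set A) \<and> x = (\<Sum>j\<le>N. mat_pow A j *v d j)"
      unfolding rep_def .
  qed
qed

end
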